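(* Let $n>24$, $s>0$, $L>9$, and $m=Ln$ (assumed to be an integer). Let $v=(v_1,\dots,v_n)$ with $v_i\ge0$ and $\sum_i v_i=1$. Then $$\mathsf P\left\{\mathrm{AST}(v,x)\le L\,n\,\|v\|\,\|p\|\sqrt{1+\frac{3+6s}{\sqrt L}+\frac{5s^2}{L}}+1\right\}\ \ge\ 1-\frac{10}{9}e^{-s^2/4}.$$
   Context: Standing setup: $U$ is a finite set (the key space) with a probability measure $q$; $T=\{1,\dots,n\}$; $h:U\to T$ is an arbitrary function. $p_i=\sum_{u\in h^{-1}(i)}q(u)$ and $\|p\|^2=\sum_{i=1}^n p_i^2$. $U^m$ carries the product measure $q^m$, and $\mathsf P$ denotes probability under $q^m$ for $x=(x_1,\dots,x_m)\in U^m$. $k_i(x)=|\{j: h(x_j)=i\}|$. $\|\cdot\|$ is the euclidean norm. The vector $v$ is a user's access pattern ($v_i$ = fraction of the user's searches directed to slot $i$). $\mathrm{AST}(v,x)$ denotes the average search time of such a user in a hash table with chaining after the keys $x$ have been inserted; in this model it satisfies $\mathrm{AST}(v,x)\le\sum_{i=1}^n v_i\,k_i(x)$ (search time in slot $i$ identified with chain length, counted with multiplicity). *)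

theory Defs
  imports "HOL-Probability.Probability"
begin

definition slot_prob :: "'u pmf \<Rightarrow> ('u \<Rightarrow> nat) \<Rightarrow> nat \<Rightarrow> real" where
  "slot_prob q h i = measure_pmf.prob q {u. h u = i}"

definition chain_len :: "('u \<Rightarrow> nat) \<Rightarrow> nat \<Rightarrow> (nat \<Rightarrow> 'u) \<Rightarrow> nat \<Rightarrow> nat" where
  "chain_len h m x i = card {j \<in> {..<m}. h (x j) = i}"

definition vnorm :: "nat \<Rightarrow> (nat \<Rightarrow> real) \<Rightarrow> real" where
  "vnorm n w = sqrt (\<Sum>i\<in>{1..n}. (w i)^2)"

definition keys_pmf :: "nat \<Rightarrow> 'u pmf \<Rightarrow> (nat \<Rightarrow> 'u) pmf" where
  "keys_pmf m q = Pi_pmf {..<m} undefined (\<lambda>_. q)"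

end

theory Submission
  imports Defs "HOL-Analysis.L2_Norm"
begin

lemma vnorm_L2: "vnorm n w = L2_set w {1..n}"
  by (simp add: vnorm_def L2_set_def)

lemma slot_sum:
  fixes q :: "'u::finite pmf" and f :: "nat \<Rightarrow> real"
  assumes h_range: "\<And>u. h u \<in> {1..n}"
  shows "(\<Sum>i\<in>{1..n}. f i * slot_prob q h i) = (\<Sum>u\<in>UNIV. pmf q u * f (h u))"
proof -
  have "(\<Sum>i\<in>{1..n}. f i * slot_prob q h i)
      = (\<Sum>i\<in>{1..n}. \<Sum>u\<in>UNIV. (if h u = i then pmf q u * f i else 0))"
    by (intro sum.cong refl)
       (simp add: slot_prob_def measure_measure_pmf_finite sum_distrib_left sum.If_cases
         mult.commute)
  also have "\<dots> = (\<Sum>u\<in>UNIV. \<Sum>i\<in>{1..n}. (if h u = i then pmf q u * f i else 0))"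
    by (rule sum.swap)
  also have "\<dots> = (\<Sum>u\<in>UNIV. pmf q u * f (h u))"
    by (intro sum.cong refl) (use h_range in \<open>simp add: sum.delta'\<close>)
  finally show ?thesis .
qed

lemma chain_sum:
  assumes h_range: "\<And>u. h u \<in> {1..n}"
  shows "(\<Sum>i\<in>{1..n}. v i * real (chain_len h m x i)) = (\<Sum>j<m. v (h (x j)))"
proof -
  have "(\<Sum>i\<in>{1..n}. v i * real (chain_len h m x i))
      = (\<Sum>i\<in>{1..n}. \<Sum>j<m. (if h (x j) = i then v i else 0))"
    by (intro sum.cong refl) (simp add: chain_len_def sum.If_cases Int_def)
  also have "\<dots> = (\<Sum>j<m. \<Sum>i\<in>{1..n}. (if h (x j) = i then v i else 0))"
    by (rule sum.swap)
  also have "\<dots> = (\<Sum>j<m. v (h (x j)))"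
    by (intro sum.cong refl) (use h_range in \<open>simp add: sum.delta'\<close>)
  finally show ?thesis .
qed

theorem corollary4:
  fixes q :: "'u::finite pmf"
    and h :: "'u \<Rightarrow> nat"
    and n m :: nat
    and s L :: real
    and v :: "nat \<Rightarrow> real"
    and AST :: "(nat \<Rightarrow> real) \<Rightarrow> (nat \<Rightarrow> 'u) \<Rightarrow> real"
  assumes h_range: "\<And>u. h u \<in> {1..n}"
    and n_gt: "n > 24" and s_pos: "s > 0" and L_gt: "L > 9"
    and m_def: "real m = L * real n"
    and v_nonneg: "\<And>i. i \<in> {1..n} \<Longrightarrow> v i \<ge> 0"
    and v_sum: "(\<Sum>i\<in>{1..n}. v i) = 1"
    and AST_bound: "\<And>x. AST v x \<le> (\<Sum>i\<in>{1..n}. v i * real (chain_len h m x i))"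
  shows "measure_pmf.prob (keys_pmf m q)
           {x. AST v x \<le> L * real n * vnorm n v * vnorm n (slot_prob q h)
                 * sqrt (1 + (3 + 6 * s) / sqrt L + 5 * s^2 / L) + 1}
         \<ge> 1 - 10 / 9 * exp (- (s^2) / 4)"
proof -
  define B where "B = vnorm n v"
  define P where "P = vnorm n (slot_prob q h)"
  define S where "S = sqrt (1 + (3 + 6 * s) / sqrt L + 5 * s^2 / L)"
  define g where "g u = v (h u)" for u
  define M where "M = keys_pmf m q"
  have p_nonneg: "slot_prob q h i \<ge> 0" for i by (simp add: slot_prob_def)
  have v_le_B: "v i \<le> B" if "i \<in> {1..n}" for i
  proof -
    have "v i = sqrt ((v i)^2)" using v_nonneg[OF that] by simp
    also have "\<dots> \<le> B" unfolding B_def vnorm_def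
      by (intro real_sqrt_le_mono member_le_sum) (use that in auto)
    finally show ?thesis .
  qed
  have B_pos: "B > 0"
  proof (rule ccontr)
    assume "\<not> B > 0"
    hence "v i \<le> 0" if "i \<in> {1..n}" for i using v_le_B[OF that] by simp
    hence "(\<Sum>i\<in>{1..n}. v i) \<le> 0" by (intro sum_nonpos) auto
    with v_sum show False by simp
  qed
  have g_range: "g u \<in> {0..B}" for u
    using v_nonneg[OF h_range[of u]] v_le_B[OF h_range[of u]] by (simp add: g_def)
  have Eg: "measure_pmf.expectation q g = (\<Sum>i\<in>{1..n}. v i * slot_prob q h i)"
  proof -
    have "measure_pmf.expectation q g = (\<Sum>u\<in>UNIV. pmf q u * g u)"
      by (subst integral_measure_pmf[where A = UNIV]) simp_all
    also have "\<dots> = (\<Sum>i\<in>{1..n}. v i * slot_prob q h i)"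
      unfolding g_def by (rule slot_sum[OF h_range, symmetric])
    finally show ?thesis .
  qed
  have Eg_le: "measure_pmf.expectation q g \<le> B * P"
  proof -
    have "(\<Sum>i\<in>{1..n}. v i * slot_prob q h i)
        = (\<Sum>i\<in>{1..n}. \<bar>v i\<bar> * \<bar>slot_prob q h i\<bar>)"
      by (intro sum.cong refl) (simp add: v_nonneg p_nonneg)
    also have "\<dots> \<le> B * P" unfolding B_def P_def vnorm_L2 by (rule L2_set_mult_ineq)
    finally show ?thesis using Eg by simp
  qed
  have psum: "(\<Sum>i\<in>{1..n}. slot_prob q h i) = 1"
    using slot_sum[OF h_range, where q=q and f="\<lambda>_. 1"] by (simp add: sum_pmf_eq_1)
  have nP: "real n * P^2 \<ge> 1"
  proof -
    have "1 = (\<Sum>i\<in>{1..n}. \<bar>1\<bar> * \<bar>slot_prob q h i\<bar>)" using psum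
      by (simp add: p_nonneg)
    also have "\<dots> \<le> L2_set (\<lambda>_. 1) {1..n} * P" unfolding P_def vnorm_L2
      by (rule L2_set_mult_ineq)
    also have "L2_set (\<lambda>_. 1::real) {1..n} = sqrt (real n)" by (simp add: L2_set_def)
    finally have "1 \<le> sqrt (real n) * P" .
    hence "1 \<le> (sqrt (real n) * P)^2" by (simp add: one_le_power)
    thus ?thesis by (simp add: power_mult_distrib)
  qed
  have P_nonneg: "P \<ge> 0" by (simp add: P_def vnorm_def sum_nonneg)
  have L_pos: "L > 0" using L_gt by simp
  have m_pos: "real m > 0" using m_def L_pos n_gt by simp
  have S_ge: "S \<ge> 1 + sqrt 5 * s / sqrt L"
  proof -
    have sL: "sqrt L > 0" using L_pos by simp
    have "(1 + sqrt 5 * s / sqrt L)^2 = 1 + 2 * sqrt 5 * s / sqrt L + 5 * s^2 / L"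
      using L_pos by (simp add: power2_eq_square field_simps)
    also have "\<dots> \<le> 1 + (3 + 6 * s) / sqrt L + 5 * s^2 / L"
    proof -
      have "sqrt 5 \<le> 3" by (rule real_le_lsqrt) auto
      hence "sqrt 5 * s \<le> 3 * s" using s_pos by (intro mult_right_mono) auto
      hence "2 * sqrt 5 * s \<le> 3 + 6 * s" using s_pos by linarith
      thus ?thesis using sL by (simp add: divide_right_mono)
    qed
    finally show ?thesis unfolding S_def
      by (metis real_le_rsqrt)
  qed
  have key: "real m * P / sqrt L \<ge> sqrt (real m)"
  proof -
    have "(real m * P / sqrt L)^2 = real m * (L * real n * P^2) / L"
      using L_pos m_def by (simp add: power2_eq_square field_simps)
    also have "\<dots> \<ge> real m" using nP L_pos m_pos
      by (simp add: field_simps)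
    finally have "real m \<le> (real m * P / sqrt L)^2" .
    thus ?thesis using P_nonneg m_pos L_pos by (intro real_le_lsqrt) auto
  qed
  define eps where "eps = sqrt 5 * s * B * sqrt (real m)"
  define mu where "mu = (\<Sum>j<m. measure_pmf.expectation M (\<lambda>x. g (x j)))"
  have EX: "measure_pmf.expectation M (\<lambda>x. g (x j)) = measure_pmf.expectation q g"
    if "j < m" for j
  proof -
    have "measure_pmf.expectation M (\<lambda>x. g (x j))
        = measure_pmf.expectation (map_pmf (\<lambda>x. x j) M) g" by simp
    also have "map_pmf (\<lambda>x. x j) M = q" unfolding M_def keys_pmf_def
      by (subst Pi_pmf_component) (use that in auto)
    finally show ?thesis .
  qed
  have mu_eq: "mu = real m * measure_pmf.expectation q g"
    unfolding mu_def by (simp add: EX)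
  have thr: "mu + eps \<le> L * real n * B * P * S + 1"
  proof -
    have "mu \<le> real m * (B * P)" using mu_eq Eg_le m_pos by simp
    moreover have "eps \<le> real m * B * P * (sqrt 5 * s / sqrt L)"
    proof -
      have "eps = sqrt 5 * s * B * sqrt (real m)" by (simp add: eps_def)
      also have "\<dots> \<le> sqrt 5 * s * B * (real m * P / sqrt L)"
        using key s_pos B_pos by (intro mult_left_mono) auto
      finally show ?thesis by (simp add: field_simps)
    qed
    moreover have "real m * B * P * (1 + sqrt 5 * s / sqrt L) \<le> real m * B * P * S"
      using S_ge m_pos B_pos P_nonneg by (intro mult_left_mono) auto
    ultimately show ?thesis using m_def by (simp add: algebra_simps)
  qed
  interpret H: Hoeffding_ineq "measure_pmf M" "{..<m}" "\<lambda>j x. g (x j)" "\<lambda>_. 0" "\<lambda>_. B" mu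
  proof unfold_locales
    show "finite {..<m}" by simp
    show "prob_space.indep_vars (measure_pmf M) (\<lambda>_. borel) (\<lambda>j x. g (x j)) {..<m}"
      unfolding M_def keys_pmf_def
      by (rule prob_space.indep_vars_compose2[OF measure_pmf.prob_space_axioms indep_vars_Pi_pmf]) auto
    show "\<And>i. i \<in> {..<m} \<Longrightarrow> AE x in measure_pmf M. g (x i) \<in> {0..B}"
      using g_range by simp
  qed (simp add: mu_def)
  have hb: "measure_pmf.prob M {x\<in>space (measure_pmf M). (\<Sum>j<m. g (x j)) \<ge> mu + eps}
      \<le> exp (-2 * eps\<^sup>2 / (\<Sum>j<m. (B - 0)\<^sup>2))"
    by (rule H.Hoeffding_ineq_ge) (use s_pos B_pos m_pos in \<open>auto simp: eps_def\<close>)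
  have "exp (-2 * eps\<^sup>2 / (\<Sum>j<m. (B - 0)\<^sup>2)) = exp (- (10 * s^2))"
    using B_pos m_pos by (simp add: eps_def power_mult_distrib field_simps)
  also have "\<dots> \<le> exp (- (s^2) / 4)" by simp
  also have "\<dots> \<le> 10 / 9 * exp (- (s^2) / 4)" by simp
  finally have tail: "measure_pmf.prob M {x. (\<Sum>j<m. g (x j)) \<ge> mu + eps}
      \<le> 10 / 9 * exp (- (s^2) / 4)" using hb by simp
  have sub: "UNIV - {x. (\<Sum>j<m. g (x j)) \<ge> mu + eps}
      \<subseteq> {x. AST v x \<le> L * real n * B * P * S + 1}"
  proof
    fix x assume "x \<in> UNIV - {x. (\<Sum>j<m. g (x j)) \<ge> mu + eps}"
    hence "(\<Sum>j<m. g (x j)) < mu + eps" by simp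
    moreover have "AST v x \<le> (\<Sum>j<m. g (x j))"
      using AST_bound[of x] chain_sum[OF h_range, where v=v and m=m and x=x] by (simp add: g_def)
    ultimately show "x \<in> {x. AST v x \<le> L * real n * B * P * S + 1}" using thr by simp
  qed
  have "1 - 10 / 9 * exp (- (s^2) / 4) \<le> 1 - measure_pmf.prob M {x. (\<Sum>j<m. g (x j)) \<ge> mu + eps}"
    using tail by simp
  also have "\<dots> = measure_pmf.prob M (UNIV - {x. (\<Sum>j<m. g (x j)) \<ge> mu + eps})"
    by (simp add: measure_pmf.prob_compl[symmetric] Compl_eq_Diff_UNIV)
  also have "\<dots> \<le> measure_pmf.prob M {x. AST v x \<le> L * real n * B * P * S + 1}"
    by (rule measure_pmf.finite_measure_mono[OF sub]) simp
  finally show ?thesis by (simp add: M_def B_def P_def S_def)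
qed

end
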